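(* Fix a constant $0<\alpha<1$. For $D\le \alpha n$ and $0<k\le D$, the minimum size of advice sufficient to perform topology recognition in time $D-k$ in the class of graphs of size $n$ and diameter $D$ is in $\Theta((n^2\log n)/(D-k+1))$ (the upper bound holds for labeled topology recognition and the lower bound for anonymous topology recognition), with constants depending only on $\alpha$.
   Context: Graphs are finite, simple, undirected, connected, with no node labels; at each node of degree $d$ the incident edges carry distinct port numbers $0,\dots,d-1$ (no coherence between endpoints). Isomorphism is a bijection of nodes preserving edges and port numbers at both endpoints. Size = number of nodes; $\log$ is base 2. Communication model (LOCAL): synchronous rounds, all nodes start simultaneously; in each round every node may send arbitrary messages to all neighbours, receives their messages (knowing the arrival port), and performs arbitrary local computation. Initially a node knows only its degree and its advice. Advice: an oracle knowing the graph assigns each node a binary string; the size of advice is the maximum string length. All nodes run the same deterministic algorithm. Anonymous topology recognition: every node outputs a port-labeled graph isomorphic to $G$. Labeled topology recognition: all nodes output the same port-labeled graph $H$ with distinct node labels and each node its own label, such that some isomorphism $G\to H$ maps every node to the node carrying the label it output. The minimum size of advice sufficient for time $T$ on a class is the least $s$ such that some deterministic algorithm and, for each graph of the class, some advice assignment of size at most $s$ accomplish the task within $T$ rounds on every graph of the class. *)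

theory Defs
  imports Complex_Main
begin

text \<open>A port-labeled graph has nodes 0..<pg_n. Node u has degree pg_deg u, and
  pg_nbr u i is the neighbour reached from u via port i (for i < pg_deg u).\<close>

record pgraph =
  pg_n   :: nat
  pg_deg :: "nat \<Rightarrow> nat"
  pg_nbr :: "nat \<Rightarrow> nat \<Rightarrow> nat"

definition adj :: "pgraph \<Rightarrow> nat \<Rightarrow> nat \<Rightarrow> bool" where
  "adj G u v \<longleftrightarrow> u < pg_n G \<and> v < pg_n G \<and> (\<exists>i < pg_deg G u. pg_nbr G u i = v)"

definition connected_pg :: "pgraph \<Rightarrow> bool" where
  "connected_pg G \<longleftrightarrow> (\<forall>u < pg_n G. \<forall>v < pg_n G. (adj G)\<^sup>*\<^sup>* u v)"

definition wf_pgraph :: "pgraph \<Rightarrow> bool" where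
  "wf_pgraph G \<longleftrightarrow>
     (\<forall>u < pg_n G. \<forall>i < pg_deg G u. pg_nbr G u i < pg_n G \<and> pg_nbr G u i \<noteq> u) \<and>
     (\<forall>u < pg_n G. inj_on (pg_nbr G u) {..<pg_deg G u}) \<and>
     (\<forall>u < pg_n G. \<forall>i < pg_deg G u. \<exists>j < pg_deg G (pg_nbr G u i). pg_nbr G (pg_nbr G u i) j = u) \<and>
     connected_pg G"

definition dist_pg :: "pgraph \<Rightarrow> nat \<Rightarrow> nat \<Rightarrow> nat" where
  "dist_pg G u v = (LEAST d. (adj G ^^ d) u v)"

definition diameter_pg :: "pgraph \<Rightarrow> nat" where
  "diameter_pg G = Max {dist_pg G u v | u v. u < pg_n G \<and> v < pg_n G}"

definition pg_iso :: "pgraph \<Rightarrow> pgraph \<Rightarrow> (nat \<Rightarrow> nat) \<Rightarrow> bool" where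
  "pg_iso G H f \<longleftrightarrow> pg_n H = pg_n G \<and> bij_betw f {..<pg_n G} {..<pg_n H} \<and>
     (\<forall>u < pg_n G. pg_deg H (f u) = pg_deg G u \<and>
        (\<forall>i < pg_deg G u. pg_nbr H (f u) i = f (pg_nbr G u i)))"

definition graph_class :: "nat \<Rightarrow> nat \<Rightarrow> pgraph set" where
  "graph_class n D = {G. wf_pgraph G \<and> pg_n G = n \<and> diameter_pg G = D}"

text \<open>Universal data type for local states and messages (arbitrary finite data).\<close>
datatype dat = DNat nat | DList "dat list"

text \<open>A deterministic algorithm: initial state from degree and advice, a message per
  outgoing port, a state transition from the messages received indexed by arrival port,
  and a final node_output (a port-labeled graph and a node label).\<close>
record algo =
  a_init  :: "nat \<Rightarrow> bool list \<Rightarrow> dat"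
  a_send  :: "dat \<Rightarrow> nat \<Rightarrow> dat"
  a_trans :: "dat \<Rightarrow> dat list \<Rightarrow> dat"
  a_out   :: "dat \<Rightarrow> pgraph \<times> nat"

definition rport :: "pgraph \<Rightarrow> nat \<Rightarrow> nat \<Rightarrow> nat" where
  "rport G v i = (THE j. j < pg_deg G (pg_nbr G v i) \<and> pg_nbr G (pg_nbr G v i) j = v)"

fun run :: "algo \<Rightarrow> pgraph \<Rightarrow> (nat \<Rightarrow> bool list) \<Rightarrow> nat \<Rightarrow> nat \<Rightarrow> dat" where
  "run A G adv 0 v = a_init A (pg_deg G v) (adv v)"
| "run A G adv (Suc t) v =
     a_trans A (run A G adv t v)
       (map (\<lambda>i. a_send A (run A G adv t (pg_nbr G v i)) (rport G v i)) [0..<pg_deg G v])"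

definition node_output :: "algo \<Rightarrow> pgraph \<Rightarrow> (nat \<Rightarrow> bool list) \<Rightarrow> nat \<Rightarrow> nat \<Rightarrow> pgraph \<times> nat" where
  "node_output A G adv T v = a_out A (run A G adv T v)"

definition advice_size :: "pgraph \<Rightarrow> (nat \<Rightarrow> bool list) \<Rightarrow> nat" where
  "advice_size G adv = Max ((\<lambda>v. length (adv v)) ` {..<pg_n G})"

definition anon_TR :: "algo \<Rightarrow> pgraph \<Rightarrow> (nat \<Rightarrow> bool list) \<Rightarrow> nat \<Rightarrow> bool" where
  "anon_TR A G adv T \<longleftrightarrow> (\<forall>v < pg_n G. \<exists>f. pg_iso G (fst (node_output A G adv T v)) f)"

text \<open>Labeled topology recognition within T rounds: all nodes node_output the same H
  (whose nodes 0..<n serve as distinct labels) and each node its own label.\<close>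
definition labeled_TR :: "algo \<Rightarrow> pgraph \<Rightarrow> (nat \<Rightarrow> bool list) \<Rightarrow> nat \<Rightarrow> bool" where
  "labeled_TR A G adv T \<longleftrightarrow>
     (\<exists>H f. pg_iso G H f \<and> (\<forall>v < pg_n G. node_output A G adv T v = (H, f v)))"

definition min_advice ::
  "(algo \<Rightarrow> pgraph \<Rightarrow> (nat \<Rightarrow> bool list) \<Rightarrow> nat \<Rightarrow> bool) \<Rightarrow> pgraph set \<Rightarrow> nat \<Rightarrow> nat" where
  "min_advice task C T =
     (LEAST s. \<exists>A. \<forall>G \<in> C. \<exists>adv. advice_size G adv \<le> s \<and> task A G adv T)"

end

theory Submission
  imports Defs "HOL-Library.FuncSet" "HOL-Combinatorics.Permutations"
begin


fun nat_bits :: "nat \<Rightarrow> nat \<Rightarrow> bool list" where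
  "nat_bits 0 x = []"
| "nat_bits (Suc w) x = odd x # nat_bits w (x div 2)"

fun bits_nat :: "bool list \<Rightarrow> nat" where
  "bits_nat [] = 0"
| "bits_nat (b # bs) = (if b then 1 else 0) + 2 * bits_nat bs"

lemma length_nat_bits[simp]: "length (nat_bits w x) = w"
  by (induction w arbitrary: x) auto

lemma bits_nat_nat_bits: "bits_nat (nat_bits w x) = x mod 2 ^ w"
proof (induction w arbitrary: x)
  case 0 then show ?case by simp
next
  case (Suc w)
  have "x mod 2 ^ Suc w = x mod 2 + 2 * ((x div 2) mod 2 ^ w)"
    by (simp add: mod_mult2_eq mult.commute)
  then show ?case using Suc by (auto simp: odd_iff_mod_2_eq_one)
qed

definition enc_list :: "nat \<Rightarrow> nat list \<Rightarrow> bool list" where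
  "enc_list w xs = concat (map (nat_bits w) xs)"

definition getf :: "nat \<Rightarrow> bool list \<Rightarrow> nat \<Rightarrow> nat" where
  "getf w bs p = bits_nat (take w (drop (p * w) bs))"

lemma length_enc_list: "length (enc_list w xs) = w * length xs"
  by (induction xs) (auto simp: enc_list_def)

lemma drop_concat_eqlen:
  assumes "\<forall>x\<in>set xs. length (f x) = w" "i \<le> length xs"
  shows "drop (i * w) (concat (map f xs)) = concat (map f (drop i xs))"
  using assms
proof (induction xs arbitrary: i)
  case Nil then show ?case by simp
next
  case (Cons x xs)
  show ?case
  proof (cases i)
    case 0 then show ?thesis by simp
  next
    case (Suc j)
    have "drop (i * w) (concat (map f (x # xs))) = drop (j * w) (concat (map f xs))"
      using Cons.prems Suc by (simp add: add.commute)
    then show ?thesis using Cons Suc by simp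
  qed
qed

lemma getf_enc_list:
  assumes "p < length xs"
  shows "getf w (enc_list w xs) p = xs ! p mod 2 ^ w"
proof -
  have "drop (p * w) (enc_list w xs) = concat (map (nat_bits w) (drop p xs))"
    unfolding enc_list_def using assms by (intro drop_concat_eqlen) auto
  moreover have "drop p xs = xs ! p # drop (Suc p) xs" using assms by (simp add: Cons_nth_drop_Suc)
  ultimately show ?thesis unfolding getf_def by (simp add: bits_nat_nat_bits)
qed

lemma getf_enc_list':
  assumes "p < length xs" "xs ! p < 2 ^ w"
  shows "getf w (enc_list w xs) p = xs ! p"
  using getf_enc_list[OF assms(1)] assms(2) by simp

lemma concat_map_nth_eqlen:
  assumes "\<forall>x\<in>set xs. length (f x) = b" "i < length xs" "j < b"
  shows "concat (map f xs) ! (i * b + j) = f (xs ! i) ! j"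
  using assms
proof (induction xs arbitrary: i)
  case Nil then show ?case by simp
next
  case (Cons x xs)
  show ?case
  proof (cases i)
    case 0 then show ?thesis using Cons.prems by (simp add: nth_append)
  next
    case (Suc k)
    then have "concat (map f (x # xs)) ! (i * b + j) = concat (map f xs) ! (k * b + j)"
      using Cons.prems by (simp add: nth_append algebra_simps)
    then show ?thesis using Cons Suc by simp
  qed
qed

definition benc :: "bool list \<Rightarrow> dat" where
  "benc bs = DList (map (\<lambda>b. DNat (if b then 1 else 0)) bs)"

fun bdec :: "dat \<Rightarrow> bool list" where
  "bdec (DList ds) = map (\<lambda>d. d = DNat 1) ds"
| "bdec (DNat _) = []"

lemma bdec_benc[simp]: "bdec (benc bs) = bs"
  by (induction bs) (auto simp: benc_def)

lemma benc_inj: "benc a = benc b \<Longrightarrow> a = b"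
  by (metis bdec_benc)

fun items :: "dat \<Rightarrow> dat list" where
  "items (DList xs) = xs"
| "items (DNat _) = []"


lemma wf_nbr:
  assumes "wf_pgraph G" "u < pg_n G" "i < pg_deg G u"
  shows "pg_nbr G u i < pg_n G" "pg_nbr G u i \<noteq> u"
  using assms unfolding wf_pgraph_def by auto

lemma wf_deg_less:
  assumes "wf_pgraph G" "u < pg_n G"
  shows "pg_deg G u < pg_n G"
proof -
  have inj: "inj_on (pg_nbr G u) {..<pg_deg G u}" using assms unfolding wf_pgraph_def by auto
  have "pg_nbr G u ` {..<pg_deg G u} \<subseteq> {..<pg_n G} - {u}" using wf_nbr[OF assms] by auto
  from card_inj_on_le[OF inj this] have "pg_deg G u \<le> card ({..<pg_n G} - {u})" by simp
  also have "\<dots> = pg_n G - 1" using assms(2) by simp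
  finally show ?thesis using assms(2) by simp
qed

lemma adj_sym:
  assumes "wf_pgraph G" "adj G u v" shows "adj G v u"
  using assms unfolding adj_def wf_pgraph_def by blast

lemma relpow_sym:
  assumes "wf_pgraph G" "(adj G ^^ j) u v" shows "(adj G ^^ j) v u"
  using assms(2)
proof (induction j arbitrary: v)
  case 0 then show ?case by simp
next
  case (Suc j)
  then obtain z where "(adj G ^^ j) u z" "adj G z v" by (auto elim: relpowp_Suc_E)
  then show ?case using Suc.IH adj_sym[OF assms(1)] by (meson relpowp_Suc_I2)
qed

lemma relpow_range:
  assumes "(adj G ^^ j) v z" "v < pg_n G" shows "z < pg_n G"
  using assms
proof (induction j arbitrary: z)
  case 0 then show ?case by simp
next
  case (Suc j)
  then obtain y where "(adj G ^^ j) v y" "adj G y z" by (auto elim: relpowp_Suc_E)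
  then show ?case unfolding adj_def by auto
qed

lemma reach:
  assumes "wf_pgraph G" "u < pg_n G" "v < pg_n G"
  shows "\<exists>d. (adj G ^^ d) u v"
  using assms unfolding wf_pgraph_def connected_pg_def by (meson rtranclp_imp_relpowp)

lemma dist_path:
  assumes "wf_pgraph G" "u < pg_n G" "v < pg_n G"
  shows "(adj G ^^ dist_pg G u v) u v"
  unfolding dist_pg_def using reach[OF assms] by (rule LeastI_ex)

lemma dist_le: "(adj G ^^ d) u v \<Longrightarrow> dist_pg G u v \<le> d"
  unfolding dist_pg_def by (rule Least_le)

lemma dist_sym:
  assumes "wf_pgraph G" "u < pg_n G" "v < pg_n G"
  shows "dist_pg G u v = dist_pg G v u"
  using dist_le[OF relpow_sym[OF assms(1) dist_path[OF assms]]]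
        dist_le[OF relpow_sym[OF assms(1) dist_path[OF assms(1,3,2)]]] by simp

lemma dist_tri:
  assumes "wf_pgraph G" "u < pg_n G" "v < pg_n G" "w < pg_n G"
  shows "dist_pg G u w \<le> dist_pg G u v + dist_pg G v w"
proof -
  have "(adj G ^^ (dist_pg G u v + dist_pg G v w)) u w"
    using dist_path[OF assms(1,2,3)] dist_path[OF assms(1,3,4)] by (auto simp: relpowp_add)
  then show ?thesis by (rule dist_le)
qed

lemma relpow_split:
  assumes "(R ^^ (a + b)) x y" shows "\<exists>z. (R ^^ a) x z \<and> (R ^^ b) z y"
  using assms by (auto simp: relpowp_add)

definition mkA :: "(dat \<Rightarrow> pgraph \<times> nat) \<Rightarrow> algo" where
  "mkA out = \<lparr>a_init = (\<lambda>d bs. DList [benc bs]), a_send = (\<lambda>s p. s),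
     a_trans = (\<lambda>s ms. DList (items s @ concat (map items ms))), a_out = out\<rparr>"

lemma run_mkA_0[simp]: "run (mkA out) G adv 0 v = DList [benc (adv v)]"
  by (simp add: mkA_def)

lemma items_run_Suc[simp]: "items (run (mkA out) G adv (Suc t) v) = items (run (mkA out) G adv t v) @
   concat (map (\<lambda>i. items (run (mkA out) G adv t (pg_nbr G v i))) [0..<pg_deg G v])"
  by (simp add: mkA_def o_def)

lemma run_mkA_Suc: "run (mkA out) G adv (Suc t) v = DList (items (run (mkA out) G adv (Suc t) v))"
  by (simp add: mkA_def)

declare run.simps[simp del]

lemma flood_hd: "\<exists>rest. items (run (mkA out) G adv t v) = benc (adv v) # rest"
proof (induction t arbitrary: v)
  case 0 then show ?case by simp
next
  case (Suc t)
  then obtain rest where "items (run (mkA out) G adv t v) = benc (adv v) # rest" by blast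
  then show ?case by simp
qed

lemma flood_sound:
  assumes "wf_pgraph G" "v < pg_n G"
  shows "set (items (run (mkA out) G adv t v)) \<subseteq> benc ` adv ` {..<pg_n G}"
  using assms(2)
proof (induction t arbitrary: v)
  case 0 then show ?case using assms by auto
next
  case (Suc t)
  have "set (items (run (mkA out) G adv t (pg_nbr G v i))) \<subseteq> benc ` adv ` {..<pg_n G}"
    if "i < pg_deg G v" for i using Suc.IH wf_nbr[OF assms(1) Suc.prems that] by blast
  then show ?case using Suc by fastforce
qed

lemma flood_complete:
  assumes "wf_pgraph G" "v < pg_n G" "(adj G ^^ j) v u" "j \<le> t"
  shows "benc (adv u) \<in> set (items (run (mkA out) G adv t v))"
  using assms(2-4)
proof (induction t arbitrary: v j)
  case 0
  then show ?case by auto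
next
  case (Suc t)
  have sub: "set (items (run (mkA out) G adv t v)) \<subseteq> set (items (run (mkA out) G adv (Suc t) v))"
    by auto
  show ?case
  proof (cases j)
    case 0
    then have "u = v" using Suc.prems by simp
    then show ?thesis using flood_hd[of out G adv "Suc t" v] by (metis list.set_intros(1))
  next
    case (Suc j')
    then obtain z where z: "adj G v z" "(adj G ^^ j') z u" using Suc.prems(2)
      by (metis relpowp_Suc_D2)
    then obtain i where i: "i < pg_deg G v" "pg_nbr G v i = z" unfolding adj_def by auto
    have "z < pg_n G" using z unfolding adj_def by auto
    then have "benc (adv u) \<in> set (items (run (mkA out) G adv t z))"
      using Suc.IH z(2) Suc.prems(3) \<open>j = Suc j'\<close> by auto
    moreover have "items (run (mkA out) G adv t z) \<in> set (map (\<lambda>i. items (run (mkA out) G adv t (pg_nbr G v i))) [0..<pg_deg G v])"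
      using i by auto
    ultimately show ?thesis by fastforce
  qed
qed

declare run.simps[simp]


lemma diam_facts:
  assumes "wf_pgraph G" "0 < pg_n G"
  shows "\<exists>r w. r < pg_n G \<and> w < pg_n G \<and> dist_pg G r w = diameter_pg G"
    and "\<And>u v. u < pg_n G \<Longrightarrow> v < pg_n G \<Longrightarrow> dist_pg G u v \<le> diameter_pg G"
proof -
  let ?S = "{dist_pg G u v | u v. u < pg_n G \<and> v < pg_n G}"
  have "?S = (\<lambda>(u,v). dist_pg G u v) ` ({..<pg_n G} \<times> {..<pg_n G})" by auto
  then have fin: "finite ?S" by simp
  have ne: "?S \<noteq> {}" using assms(2) by auto
  from Max_in[OF fin ne] obtain r w where "Max ?S = dist_pg G r w" "r < pg_n G" "w < pg_n G"
    by blast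
  then show "\<exists>r w. r < pg_n G \<and> w < pg_n G \<and> dist_pg G r w = diameter_pg G"
    unfolding diameter_pg_def by auto
  show "\<And>u v. u < pg_n G \<Longrightarrow> v < pg_n G \<Longrightarrow> dist_pg G u v \<le> diameter_pg G"
    unfolding diameter_pg_def using fin by (intro Max_ge) auto
qed

lemma exists_residue: "0 < (m::nat) \<Longrightarrow> c < m \<Longrightarrow> \<exists>x. a \<le> x \<and> x < a + m \<and> x mod m = c"
proof -
  assume m: "0 < m" "c < m"
  define r where "r = a mod m"
  have a: "a = (a div m) * m + r" unfolding r_def by simp
  have rm: "r < m" unfolding r_def using m by simp
  show ?thesis
  proof (cases "r \<le> c")
    case True
    have "((a div m) * m + c) mod m = c" using m by simp
    then show ?thesis using True rm m a by (intro exI[of _ "(a div m) * m + c"]) linarith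
  next
    case False
    have "(a div m) * m + m + c = c + (a div m + 1) * m" by simp
    also have "(c + (a div m + 1) * m) mod m = c mod m" by (rule mod_mult_self1)
    finally have "((a div m) * m + m + c) mod m = c" using m by simp
    then show ?thesis using False rm m a by (intro exI[of _ "(a div m) * m + m + c"]) linarith
  qed
qed

lemma coverage:
  assumes wf: "wf_pgraph G" and r: "r < pg_n G" and w: "w < pg_n G"
    and rw: "dist_pg G r w = D" and TD: "T < D" and m: "m = T div 2 + 1"
    and v: "v < pg_n G" and c: "c < m"
  shows "\<exists>u < pg_n G. \<exists>j \<le> T. (adj G ^^ j) v u \<and> dist_pg G r u mod m = c"
proof -
  define d where "d = dist_pg G v r"
  have pvr: "(adj G ^^ d) v r" unfolding d_def using dist_path[OF wf v r] .
  have onpath: "\<exists>u < pg_n G. (adj G ^^ (d - x)) v u \<and> dist_pg G r u = x" if "x \<le> d" for x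
  proof -
    from that have "(adj G ^^ ((d - x) + x)) v r" using pvr by simp
    then obtain z where z: "(adj G ^^ (d - x)) v z" "(adj G ^^ x) z r" using relpow_split by metis
    have zn: "z < pg_n G" using relpow_range[OF z(1) v] .
    have "dist_pg G z r \<le> x" using dist_le[OF z(2)] .
    moreover have "d \<le> (d - x) + dist_pg G z r"
      using dist_tri[OF wf v zn r] dist_le[OF z(1)] unfolding d_def by linarith
    ultimately have "dist_pg G z r = x" using that by linarith
    then show ?thesis using z zn dist_sym[OF wf zn r] by auto
  qed
  show ?thesis
  proof (cases "T \<le> d")
    case True
    obtain x where x: "d - T \<le> x" "x < d - T + m" "x mod m = c"
      using exists_residue[of m c "d - T"] m c by auto
    have "x \<le> d" using x m True by linarith
    then obtain u where u: "u < pg_n G" "(adj G ^^ (d - x)) v u" "dist_pg G r u = x" using onpath by blast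
    show ?thesis using u x by (intro exI[of _ u] conjI exI[of _ "d - x"]) auto
  next
    case False
    show ?thesis
    proof (cases "c \<le> d")
      case True
      then obtain u where u: "u < pg_n G" "(adj G ^^ (d - c)) v u" "dist_pg G r u = c" using onpath by blast
      show ?thesis using u False c by (intro exI[of _ u] conjI exI[of _ "d - c"]) auto
    next
      case cd: False
      have prw: "(adj G ^^ (c + (D - c))) r w" using dist_path[OF wf r w] rw c m TD by simp
      then obtain z where z: "(adj G ^^ c) r z" "(adj G ^^ (D - c)) z w" using relpow_split by metis
      have zn: "z < pg_n G" using relpow_range[OF z(1) r] .
      have "D \<le> dist_pg G r z + (D - c)" using dist_tri[OF wf r zn w] dist_le[OF z(2)] rw by linarith
      moreover have "dist_pg G r z \<le> c" using dist_le[OF z(1)] .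
      moreover have "c < D" using c m TD by linarith
      ultimately have dz: "dist_pg G r z = c" by linarith
      have "(adj G ^^ (d + c)) v z" using pvr z(1) by (auto simp: relpowp_add)
      moreover have "d + c \<le> T" using cd c m False by linarith
      ultimately show ?thesis using zn dz c by (intro exI[of _ z] conjI exI[of _ "d + c"]) auto
    qed
  qed
qed


definition canon :: "pgraph \<Rightarrow> pgraph" where
  "canon G = \<lparr>pg_n = pg_n G, pg_deg = (\<lambda>u. if u < pg_n G then pg_deg G u else 0),
     pg_nbr = (\<lambda>u i. if u < pg_n G \<and> i < pg_deg G u then pg_nbr G u i else 0)\<rparr>"

lemma iso_canon: "pg_iso G (canon G) id"
  unfolding pg_iso_def canon_def by auto

definition block :: "pgraph \<Rightarrow> nat \<Rightarrow> nat list" where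
  "block G u = (if u < pg_n G then pg_deg G u else 0) #
     map (\<lambda>i. if u < pg_n G \<and> i < pg_deg G u then pg_nbr G u i else 0) [0..<pg_n G]"

definition gdata :: "pgraph \<Rightarrow> nat \<Rightarrow> nat \<Rightarrow> nat list" where
  "gdata G m c = concat (map (\<lambda>q. block G (q * m + c)) [0..<pg_n G div m + 1])"

definition advU :: "pgraph \<Rightarrow> nat \<Rightarrow> nat \<Rightarrow> nat \<Rightarrow> nat \<Rightarrow> bool list" where
  "advU G m r w v = enc_list w (v # (dist_pg G r v mod m) # gdata G m (dist_pg G r v mod m))"

definition look :: "nat \<Rightarrow> nat \<Rightarrow> nat \<Rightarrow> bool list list \<Rightarrow> nat \<Rightarrow> nat \<Rightarrow> nat" where
  "look n m w advs u slot =
     getf w (the (find (\<lambda>bs. getf w bs 1 = u mod m) advs)) ((u div m) * (n + 1) + slot + 2)"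

definition dec_graph :: "nat \<Rightarrow> nat \<Rightarrow> nat \<Rightarrow> bool list list \<Rightarrow> pgraph" where
  "dec_graph n m w advs = \<lparr>pg_n = n, pg_deg = (\<lambda>u. if u < n then look n m w advs u 0 else 0),
     pg_nbr = (\<lambda>u i. if u < n \<and> i < look n m w advs u 0 then look n m w advs u (Suc i) else 0)\<rparr>"

definition outU :: "nat \<Rightarrow> nat \<Rightarrow> nat \<Rightarrow> dat \<Rightarrow> pgraph \<times> nat" where
  "outU n m w s = (dec_graph n m w (map bdec (items s)), getf w (bdec (hd (items s))) 0)"

lemma block_len[simp]: "length (block G u) = pg_n G + 1"
  by (simp add: block_def)

lemma concat_block_len: "length (concat (map (\<lambda>q. block G (q * m + c)) xs)) = length xs * (pg_n G + 1)"
  by (induction xs) auto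

lemma gdata_len: "length (gdata G m c) = (pg_n G div m + 1) * (pg_n G + 1)"
  unfolding gdata_def concat_block_len by simp

lemma block_bound:
  assumes "wf_pgraph G" "0 < pg_n G" "x \<in> set (block G u)"
  shows "x < pg_n G"
  using assms wf_deg_less[OF assms(1)] wf_nbr[OF assms(1)] unfolding block_def
  by (auto split: if_splits)

lemma advU_len: "length (advU G m r w v) = w * (2 + (pg_n G div m + 1) * (pg_n G + 1))"
  by (simp add: advU_def length_enc_list gdata_len)

lemma fetch0:
  assumes "v < 2 ^ w" shows "getf w (advU G m r w v) 0 = v"
  unfolding advU_def using assms by (subst getf_enc_list') auto

lemma fetch1:
  assumes "0 < m" "m \<le> pg_n G" "pg_n G < 2 ^ w"
  shows "getf w (advU G m r w v) 1 = dist_pg G r v mod m"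
proof -
  have "dist_pg G r v mod m < m" using assms by simp
  then have "dist_pg G r v mod m < 2 ^ w" using assms by linarith
  then show ?thesis unfolding advU_def using assms by (subst getf_enc_list') auto
qed

lemma fetch_data:
  assumes wf: "wf_pgraph G" and m: "0 < m" "m \<le> pg_n G" and w: "pg_n G < 2 ^ w"
    and u: "u < pg_n G" and slot: "slot \<le> pg_n G" and c: "u mod m = c"
  shows "getf w (enc_list w (v # c # gdata G m c)) ((u div m) * (pg_n G + 1) + slot + 2)
    = block G u ! slot"
proof -
  let ?n = "pg_n G"
  have ud: "u div m < ?n div m + 1"
    using u m by (simp add: div_le_mono less_Suc_eq_le)
  have eq: "gdata G m c ! ((u div m) * (?n + 1) + slot) = block G u ! slot"
  proof -
    have "gdata G m c ! ((u div m) * (?n + 1) + slot) = block G ((u div m) * m + c) ! slot"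
      unfolding gdata_def using ud slot
      by (subst concat_map_nth_eqlen[where b = "?n + 1"]) (auto simp del: upt_Suc)
    also have "(u div m) * m + c = u" using c div_mult_mod_eq[of u m] by simp
    finally show ?thesis .
  qed
  have len: "(u div m) * (?n + 1) + slot < length (gdata G m c)"
  proof -
    have "(u div m) * (?n + 1) + slot < (u div m) * (?n + 1) + (?n + 1)" using slot by simp
    also have "\<dots> = (u div m + 1) * (?n + 1)" by simp
    also have "\<dots> \<le> (?n div m + 1) * (?n + 1)" using ud by (intro mult_right_mono) auto
    finally show ?thesis by (simp add: gdata_len)
  qed
  have bnd: "block G u ! slot < 2 ^ w"
    using block_bound[OF wf _ nth_mem[of slot "block G u"]] slot u w by fastforce
  have "getf w (enc_list w (v # c # gdata G m c)) ((u div m) * (?n + 1) + slot + 2)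
      = (v # c # gdata G m c) ! ((u div m) * (?n + 1) + slot + 2)"
    using len eq bnd by (subst getf_enc_list') (auto simp: numeral_2_eq_2)
  also have "\<dots> = block G u ! slot" using eq by (simp add: numeral_2_eq_2)
  finally show ?thesis .
qed

lemma look_ok:
  assumes wf: "wf_pgraph G" and m: "0 < m" "m \<le> pg_n G" and w: "pg_n G < 2 ^ w"
    and sound: "\<forall>a\<in>set advs. \<exists>u'<pg_n G. a = advU G m r w u'"
    and cov: "\<forall>c<m. \<exists>a\<in>set advs. getf w a 1 = c"
    and u: "u < pg_n G" and slot: "slot \<le> pg_n G"
  shows "look (pg_n G) m w advs u slot = block G u ! slot"
proof -
  have "u mod m < m" using m by simp
  then obtain a0 where "a0 \<in> set advs" "getf w a0 1 = u mod m" using cov by blast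
  then have "find (\<lambda>bs. getf w bs 1 = u mod m) advs \<noteq> None" by (auto simp: find_None_iff)
  then obtain a where a: "find (\<lambda>bs. getf w bs 1 = u mod m) advs = Some a" by blast
  then have "a \<in> set advs" "getf w a 1 = u mod m"
    by (auto simp: find_Some_iff)
  then obtain u' where u': "u' < pg_n G" "a = advU G m r w u'" "getf w a 1 = u mod m" using sound by blast
  then have col: "dist_pg G r u' mod m = u mod m" using fetch1[OF m w] by simp
  show ?thesis unfolding look_def a using u' col fetch_data[OF wf m w u slot]
    by (simp add: advU_def)
qed

lemma dec_ok:
  assumes wf: "wf_pgraph G" and m: "0 < m" "m \<le> pg_n G" and w: "pg_n G < 2 ^ w"
    and sound: "\<forall>a\<in>set advs. \<exists>u'<pg_n G. a = advU G m r w u'"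
    and cov: "\<forall>c<m. \<exists>a\<in>set advs. getf w a 1 = c"
  shows "dec_graph (pg_n G) m w advs = canon G"
proof -
  have d: "look (pg_n G) m w advs u 0 = pg_deg G u" if "u < pg_n G" for u
    using look_ok[OF wf m w sound cov that, of 0] that by (simp add: block_def)
  have nb: "look (pg_n G) m w advs u (Suc i) = pg_nbr G u i" if "u < pg_n G" "i < pg_deg G u" for u i
  proof -
    have "i < pg_n G" using wf_deg_less[OF wf that(1)] that by simp
    then show ?thesis using look_ok[OF wf m w sound cov that(1), of "Suc i"] that
      by (simp add: block_def)
  qed
  show ?thesis unfolding dec_graph_def canon_def using d nb by (auto simp: fun_eq_iff)
qed

lemma upper_one:
  assumes wf: "wf_pgraph G" and n: "0 < pg_n G" and D: "diameter_pg G = D" and TD: "T < D"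
    and m: "m = T div 2 + 1" "m \<le> pg_n G" and w: "pg_n G < 2 ^ w"
  shows "\<exists>adv. advice_size G adv \<le> w * (2 + (pg_n G div m + 1) * (pg_n G + 1))
     \<and> labeled_TR (mkA (outU (pg_n G) m w)) G adv T"
proof -
  obtain r w0 where r: "r < pg_n G" "w0 < pg_n G" "dist_pg G r w0 = D"
    using diam_facts(1)[OF wf n] D by auto
  have m0: "0 < m" using m by simp
  define adv where "adv = advU G m r w"
  have size: "advice_size G adv \<le> w * (2 + (pg_n G div m + 1) * (pg_n G + 1))"
    unfolding advice_size_def adv_def using n by (subst Max_le_iff) (auto simp: advU_len)
  have out: "node_output (mkA (outU (pg_n G) m w)) G adv T v = (canon G, id v)" if v: "v < pg_n G" for v
  proof -
    define s where "s = run (mkA (outU (pg_n G) m w)) G adv T v"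
    let ?s = s
    have ao: "a_out (mkA out) = out" for out by (simp add: mkA_def)
    obtain rest where hd: "items ?s = benc (adv v) # rest" using flood_hd unfolding s_def by blast
    have snd: "getf w (bdec (hd (items ?s))) 0 = v"
      using hd fetch0[of v w G m r] v w unfolding adv_def by simp
    have sound: "\<forall>a\<in>set (map bdec (items ?s)). \<exists>u'<pg_n G. a = advU G m r w u'"
    proof
      fix a assume "a \<in> set (map bdec (items ?s))"
      then obtain b where b: "b \<in> set (items ?s)" "a = bdec b" by auto
      then obtain u' where "u' < pg_n G" "b = benc (adv u')"
        using flood_sound[OF wf v, of "outU (pg_n G) m w" adv T] unfolding s_def by auto
      then show "\<exists>u'<pg_n G. a = advU G m r w u'" using b unfolding adv_def by auto
    qed
    have cov: "\<forall>c<m. \<exists>a\<in>set (map bdec (items ?s)). getf w a 1 = c"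
    proof (intro allI impI)
      fix c assume c: "c < m"
      obtain u j where uj: "u < pg_n G" "j \<le> T" "(adj G ^^ j) v u" "dist_pg G r u mod m = c"
        using coverage[OF wf r(1,2,3) TD m(1) v c] by blast
      have "benc (adv u) \<in> set (items ?s)" using flood_complete[OF wf v uj(3) uj(2)] unfolding s_def .
      then have "adv u \<in> set (map bdec (items ?s))" by force
      moreover have "getf w (adv u) 1 = c" unfolding adv_def using fetch1[OF m0 m(2) w] uj by simp
      ultimately show "\<exists>a\<in>set (map bdec (items ?s)). getf w a 1 = c" by blast
    qed
    have "node_output (mkA (outU (pg_n G) m w)) G adv T v = outU (pg_n G) m w s"
      unfolding node_output_def ao s_def ..
    then show ?thesis unfolding outU_def
      using dec_ok[OF wf m0 m(2) w sound cov] snd by simp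
  qed
  show ?thesis
    using size out iso_canon[of G] unfolding labeled_TR_def by blast
qed


lemma labeled_anon: "labeled_TR A G adv T \<Longrightarrow> anon_TR A G adv T"
  unfolding labeled_TR_def anon_TR_def by (metis fst_conv)

lemma width_facts:
  assumes "1 \<le> n"
  defines "w \<equiv> LEAST w. n < (2::nat) ^ w"
  shows "n < 2 ^ w" "1 \<le> w" "2 ^ (w - 1) \<le> n"
proof -
  have ex: "\<exists>w. n < (2::nat) ^ w" using less_exp by blast
  show nw: "n < 2 ^ w" unfolding w_def using LeastI_ex[OF ex] .
  show "1 \<le> w"
  proof (rule ccontr)
    assume "\<not> 1 \<le> w" then have "w = 0" by simp
    then show False using nw assms(1) by simp
  qed
  then have "\<not> n < 2 ^ (w - 1)" unfolding w_def using not_less_Least[of "w - 1" "\<lambda>w. n < 2 ^ w"]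
    by (metis One_nat_def diff_less w_def zero_less_one le_eq_less_or_eq less_le_trans)
  then show "2 ^ (w - 1) \<le> n" by simp
qed

lemma width_log:
  assumes "2 \<le> n" "1 \<le> w" "2 ^ (w - 1) \<le> n"
  shows "real w \<le> 2 * log 2 (real n)"
proof -
  have "real (2 ^ (w - 1)) \<le> real n" using assms(3) by linarith
  then have "log 2 (2 ^ (w - 1)) \<le> log 2 (real n)" using assms by (subst log_le_cancel_iff) auto
  then have "real (w - 1) \<le> log 2 (real n)" by (simp add: log_nat_power)
  moreover have "1 \<le> log 2 (real n)" using assms(1) by (simp add: le_log_iff)
  ultimately show ?thesis using assms(2) by linarith
qed

lemma upper_arith:
  assumes n: "2 \<le> n" and T: "T + 1 \<le> n" and m: "m = T div 2 + 1"
    and w: "real w \<le> 2 * log 2 (real n)"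
  shows "real (w * (2 + (n div m + 1) * (n + 1))) \<le> 16 * (real n ^ 2 * log 2 (real n) / real (T + 1))"
proof -
  define x where "x = real n / real (T + 1)"
  have x1: "1 \<le> x" unfolding x_def using T by simp
  have m2: "real (T + 1) \<le> 2 * real m" using m by linarith
  have mpos: "0 < real m" using m by simp
  have "real (n div m) \<le> real n / real m" by (rule of_nat_div_le_of_nat)
  also have "\<dots> = 2 * real n / (2 * real m)" by simp
  also have "\<dots> \<le> 2 * real n / real (T + 1)"
    by (rule divide_left_mono) (use m2 in auto)
  also have "\<dots> = 2 * x" unfolding x_def by simp
  finally have d: "real (n div m) + 1 \<le> 3 * x" using x1 by linarith
  have n1: "real n + 1 \<le> 2 * real n" using n by simp
  have "real ((n div m + 1) * (n + 1)) = (real (n div m) + 1) * (real n + 1)" by (simp add: algebra_simps)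
  also have "\<dots> \<le> (3 * x) * (2 * real n)" using d n1 by (intro mult_mono) auto
  finally have p: "real ((n div m + 1) * (n + 1)) \<le> 6 * x * real n" by simp
  have "1 * 1 \<le> x * real n" by (rule mult_mono) (use x1 n in auto)
  then have xn: "1 \<le> x * real n" by simp
  have "real (2 + (n div m + 1) * (n + 1)) \<le> 8 * x * real n" using p xn by simp
  moreover have lpos: "0 \<le> log 2 (real n)" using n by simp
  ultimately have "real (w * (2 + (n div m + 1) * (n + 1))) \<le> (2 * log 2 (real n)) * (8 * x * real n)"
    using w by (simp only: of_nat_mult) (intro mult_mono, auto)
  also have "\<dots> = 16 * (real n ^ 2 * log 2 (real n) / real (T + 1))"
    unfolding x_def by (simp add: field_simps power2_eq_square)
  finally show ?thesis .
qed

lemma upper_bound: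
  assumes n: "2 \<le> n" and TD: "T < D" and Dn: "D < n"
  shows "real (min_advice labeled_TR (graph_class n D) T)
           \<le> 16 * (real n ^ 2 * log 2 (real n) / real (T + 1))"
    and "\<exists>s A. \<forall>G \<in> graph_class n D. \<exists>adv. advice_size G adv \<le> s \<and> anon_TR A G adv T"
proof -
  define w where "w = (LEAST w. n < (2::nat) ^ w)"
  have wf: "n < 2 ^ w" "1 \<le> w" "2 ^ (w - 1) \<le> n" using width_facts[of n] n unfolding w_def by auto
  define m where "m = T div 2 + 1"
  have mn: "m \<le> n" unfolding m_def using TD Dn by linarith
  define s where "s = w * (2 + (n div m + 1) * (n + 1))"
  have all: "\<forall>G \<in> graph_class n D. \<exists>adv. advice_size G adv \<le> s \<and> labeled_TR (mkA (outU n m w)) G adv T"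
  proof
    fix G assume "G \<in> graph_class n D"
    then have G: "wf_pgraph G" "pg_n G = n" "diameter_pg G = D" unfolding graph_class_def by auto
    show "\<exists>adv. advice_size G adv \<le> s \<and> labeled_TR (mkA (outU n m w)) G adv T"
      using upper_one[OF G(1) _ G(3) TD m_def] G(2) n mn wf(1) unfolding s_def by auto
  qed
  then have "min_advice labeled_TR (graph_class n D) T \<le> s"
    unfolding min_advice_def by (intro Least_le) blast
  then have "real (min_advice labeled_TR (graph_class n D) T) \<le> real s" by simp
  also have "\<dots> \<le> 16 * (real n ^ 2 * log 2 (real n) / real (T + 1))"
    unfolding s_def using upper_arith[OF n _ m_def width_log[OF n wf(2,3)]] TD Dn by simp
  finally show "real (min_advice labeled_TR (graph_class n D) T)
           \<le> 16 * (real n ^ 2 * log 2 (real n) / real (T + 1))" .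
  show "\<exists>s A. \<forall>G \<in> graph_class n D. \<exists>adv. advice_size G adv \<le> s \<and> anon_TR A G adv T"
    using all labeled_anon by blast
qed


definition pdeg :: "nat \<Rightarrow> nat \<Rightarrow> nat \<Rightarrow> nat" where
  "pdeg n D u = (if u < D - 1 then (if u = 0 then 1 else 2) else (n - D) + (if 2 \<le> D then 1 else 0))"

definition pnbr :: "nat \<Rightarrow> nat \<Rightarrow> nat \<Rightarrow> nat \<Rightarrow> nat" where
  "pnbr n D u i = (if u < D - 1 then (if i = 0 then u + 1 else u - 1) else (if i < n - D then D + i else D - 2))"

definition base :: "nat \<Rightarrow> nat \<Rightarrow> nat \<Rightarrow> nat" where
  "base D u j = (if D + j - 1 < u then D + j - 1 else D + j)"

definition fam :: "nat \<Rightarrow> nat \<Rightarrow> (nat \<Rightarrow> nat \<Rightarrow> nat) \<Rightarrow> pgraph" where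
  "fam n D P = \<lparr>pg_n = n,
     pg_deg = (\<lambda>u. if u < D then pdeg n D u else if u < n then n - D else 0),
     pg_nbr = (\<lambda>u i. if u < D then pnbr n D u i else if u < n then (if i = 0 then D - 1 else base D u (P u i)) else 0)\<rparr>"

definition PS :: "nat \<Rightarrow> nat \<Rightarrow> (nat \<Rightarrow> nat \<Rightarrow> nat) set" where
  "PS n D = (\<Pi>\<^sub>E u \<in> {D..<n}. {p. p permutes {1..<n - D}})"

lemma base_range:
  assumes "D \<le> u" "u < n" "1 \<le> j" "j < n - D"
  shows "D \<le> base D u j" "base D u j < n" "base D u j \<noteq> u"
  using assms unfolding base_def by auto

lemma base_inj: "inj_on (base D u) {1..<k}"
  unfolding base_def inj_on_def by (auto split: if_splits)

lemma base_surj: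
  assumes "D \<le> u" "u < n" "D \<le> y" "y < n" "y \<noteq> u"
  shows "\<exists>j \<in> {1..<n - D}. base D u j = y"
proof (cases "y < u")
  case True
  then show ?thesis using assms by (intro bexI[of _ "y - D + 1"]) (auto simp: base_def)
next
  case False
  then show ?thesis using assms by (intro bexI[of _ "y - D"]) (auto simp: base_def)
qed

context
  fixes n D :: nat and P :: "nat \<Rightarrow> nat \<Rightarrow> nat"
  assumes D1: "1 \<le> D" and Dn: "D < n" and P: "P \<in> PS n D"
begin

abbreviation "G \<equiv> fam n D P"

lemma Pperm: "D \<le> u \<Longrightarrow> u < n \<Longrightarrow> P u permutes {1..<n - D}"
  using P unfolding PS_def by auto

lemma Pin: "D \<le> u \<Longrightarrow> u < n \<Longrightarrow> 1 \<le> i \<Longrightarrow> i < n - D \<Longrightarrow> 1 \<le> P u i \<and> P u i < n - D"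
  using permutes_in_image[OF Pperm] by auto

lemma fam_n[simp]: "pg_n G = n" by (simp add: fam_def)

lemma deg_path: "u < D \<Longrightarrow> pg_deg G u = pdeg n D u" by (simp add: fam_def)
lemma deg_cl: "D \<le> u \<Longrightarrow> u < n \<Longrightarrow> pg_deg G u = n - D" by (simp add: fam_def)
lemma nbr_path: "u < D \<Longrightarrow> pg_nbr G u i = pnbr n D u i" by (simp add: fam_def)
lemma nbr_cl: "D \<le> u \<Longrightarrow> u < n \<Longrightarrow> pg_nbr G u i = (if i = 0 then D - 1 else base D u (P u i))"
  by (simp add: fam_def)

lemma adjI: "u < n \<Longrightarrow> i < pg_deg G u \<Longrightarrow> pg_nbr G u i = v \<Longrightarrow> v < n \<Longrightarrow> adj G u v"
  unfolding adj_def by auto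

lemma step_up: "a + 1 < D \<Longrightarrow> adj G a (a + 1)"
  using Dn by (intro adjI[of a 0]) (auto simp: deg_path nbr_path pdeg_def pnbr_def)

lemma step_down: "a + 1 < D \<Longrightarrow> adj G (a + 1) a"
proof (cases "a + 1 < D - 1")
  case True
  assume "a + 1 < D"
  then show ?thesis using True Dn by (intro adjI[of "a+1" 1]) (auto simp: deg_path nbr_path pdeg_def pnbr_def)
next
  case False
  assume "a + 1 < D"
  then have "a + 1 = D - 1" "2 \<le> D" using False by auto
  then show ?thesis using Dn by (intro adjI[of "a+1" "n - D"]) (auto simp: deg_path nbr_path pdeg_def pnbr_def)
qed

lemma hub_cl: "D \<le> x \<Longrightarrow> x < n \<Longrightarrow> adj G (D - 1) x"
  using Dn D1 by (intro adjI[of "D - 1" "x - D"]) (auto simp: deg_path nbr_path pdeg_def pnbr_def)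

lemma cl_hub: "D \<le> x \<Longrightarrow> x < n \<Longrightarrow> adj G x (D - 1)"
  using Dn D1 by (intro adjI[of x 0]) (auto simp: deg_cl nbr_cl)

lemma cl_cl:
  assumes "D \<le> x" "x < n" "D \<le> y" "y < n" "x \<noteq> y"
  shows "adj G x y"
proof -
  obtain j where j: "j \<in> {1..<n - D}" "base D x j = y" using base_surj[of D x n y] assms by auto
  have pp: "P x permutes {1..<n - D}" using Pperm assms(1,2) .
  define i where "i = inv (P x) j"
  have i: "i \<in> {1..<n - D}" "P x i = j"
    unfolding i_def using permutes_in_image[OF permutes_inv[OF pp]] j(1) permutes_inverses(1)[OF pp]
    by auto
  show ?thesis using i j assms by (intro adjI[of x i]) (auto simp: deg_cl nbr_cl)
qed

lemma walk_path:
  assumes "a \<le> b" "b < D"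
  shows "(adj G ^^ (b - a)) a b \<and> (adj G ^^ (b - a)) b a"
  using assms
proof (induction b rule: dec_induct)
  case base then show ?case by simp
next
  case (step b)
  then have s: "Suc b - a = Suc (b - a)" by simp
  have a1: "adj G b (Suc b)" "adj G (Suc b) b" using step_up step_down step by auto
  have "b < D" using step.prems by simp
  then have ih: "(adj G ^^ (b - a)) a b" "(adj G ^^ (b - a)) b a" using step.IH by auto
  have "(adj G ^^ Suc (b - a)) a (Suc b)" using ih(1) a1(1) by (rule relpowp_Suc_I)
  moreover have "(adj G ^^ Suc (b - a)) (Suc b) a" using a1(2) ih(2) by (rule relpowp_Suc_I2)
  ultimately show ?case unfolding s by blast
qed

lemma walk_cl:
  assumes "a < D" "D \<le> x" "x < n"
  shows "(adj G ^^ (D - a)) a x \<and> (adj G ^^ (D - a)) x a"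
proof -
  have w: "(adj G ^^ (D - 1 - a)) a (D - 1) \<and> (adj G ^^ (D - 1 - a)) (D - 1) a"
    using walk_path[of a "D - 1"] assms by auto
  have e: "D - a = Suc (D - 1 - a)" using assms by simp
  have "(adj G ^^ Suc (D - 1 - a)) a x" using conjunct1[OF w] hub_cl[OF assms(2,3)] by (rule relpowp_Suc_I)
  moreover have "(adj G ^^ Suc (D - 1 - a)) x a" using cl_hub[OF assms(2,3)] conjunct2[OF w] by (rule relpowp_Suc_I2)
  ultimately show ?thesis unfolding e by blast
qed


lemma nbr_ok:
  assumes "u < n" "i < pg_deg G u"
  shows "pg_nbr G u i < n" "pg_nbr G u i \<noteq> u"
proof -
  have "pg_nbr G u i < n \<and> pg_nbr G u i \<noteq> u"
  proof (cases "u < D")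
    case True
    then show ?thesis using assms Dn D1 by (auto simp: deg_path nbr_path pdeg_def pnbr_def split: if_splits)
  next
    case False
    then have u: "D \<le> u" by simp
    show ?thesis
    proof (cases "i = 0")
      case True
      have "D - 1 < n" "D - 1 \<noteq> u" using u Dn D1 by auto
      then show ?thesis using True u assms by (simp add: nbr_cl)
    next
      case False
      then have "1 \<le> P u i" "P u i < n - D" using Pin[OF u assms(1)] assms u by (auto simp: deg_cl)
      then show ?thesis using base_range[OF u assms(1)] u assms False by (simp add: nbr_cl)
    qed
  qed
  then show "pg_nbr G u i < n" "pg_nbr G u i \<noteq> u" by auto
qed

lemma nbr_inj:
  assumes "u < n" shows "inj_on (pg_nbr G u) {..<pg_deg G u}"
proof (cases "u < D")
  case True
  then show ?thesis using assms unfolding inj_on_def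
    by (auto simp: deg_path nbr_path pdeg_def pnbr_def split: if_splits)
next
  case False
  then have u: "D \<le> u" by simp
  have pp: "P u permutes {1..<n - D}" using Pperm[OF u assms] .
  show ?thesis unfolding inj_on_def
  proof (intro ballI impI)
    fix i j assume i: "i \<in> {..<pg_deg G u}" and j: "j \<in> {..<pg_deg G u}" and e: "pg_nbr G u i = pg_nbr G u j"
    have bi: "i \<noteq> 0 \<Longrightarrow> D \<le> base D u (P u i)" using Pin[OF u assms, of i] i base_range[OF u assms] by (auto simp: deg_cl[OF u assms])
    have bj: "j \<noteq> 0 \<Longrightarrow> D \<le> base D u (P u j)" using Pin[OF u assms, of j] j base_range[OF u assms] by (auto simp: deg_cl[OF u assms])
    show "i = j"
    proof (cases "i = 0 \<or> j = 0")
      case True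
      then show ?thesis using e bi bj D1 u assms by (auto simp: nbr_cl split: if_splits)
    next
      case False
      then have "base D u (P u i) = base D u (P u j)" using e u assms by (simp add: nbr_cl)
      moreover have "P u i \<in> {1..<n - D}" "P u j \<in> {1..<n - D}"
        using Pin[OF u assms, of i] Pin[OF u assms, of j] i j False by (auto simp: deg_cl[OF u assms])
      ultimately have "P u i = P u j" using base_inj[of D u "n - D"] unfolding inj_on_def by blast
      then show ?thesis using permutes_inj[OF pp] unfolding inj_def by blast
    qed
  qed
qed

lemma adj_back:
  assumes "u < n" "i < pg_deg G u"
  shows "adj G (pg_nbr G u i) u"
proof -
  define v where "v = pg_nbr G u i"
  have vn: "v < n" "v \<noteq> u" using nbr_ok[OF assms] unfolding v_def by auto
  show ?thesis
  proof (cases "u < D")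
    case True
    show ?thesis
    proof (cases "v < D")
      case True
      have "v = u + 1 \<or> u = v + 1"
        using \<open>u < D\<close> True assms Dn D1 unfolding v_def
        by (auto simp: deg_path nbr_path pdeg_def pnbr_def split: if_splits)
      then show ?thesis using step_up step_down True \<open>u < D\<close> unfolding v_def[symmetric] by auto
    next
      case False
      have "u = D - 1"
        using \<open>u < D\<close> False assms Dn D1 unfolding v_def
        by (auto simp: deg_path nbr_path pdeg_def pnbr_def split: if_splits)
      then show ?thesis using cl_hub[of v] False vn unfolding v_def[symmetric] by auto
    qed
  next
    case False
    then have u: "D \<le> u" by simp
    show ?thesis
    proof (cases "v < D")
      case True
      have "v = D - 1"
      proof (rule ccontr)
        assume "v \<noteq> D - 1"
        then have "i \<noteq> 0" using u assms unfolding v_def by (auto simp: nbr_cl split: if_splits)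
        then have "1 \<le> P u i" "P u i < n - D" using Pin[OF u assms(1)] assms u by (auto simp: deg_cl)
        then have "D \<le> v" using base_range[OF u assms(1)] \<open>i \<noteq> 0\<close> u assms unfolding v_def by (simp add: nbr_cl)
        then show False using True by simp
      qed
      then show ?thesis using hub_cl[OF u assms(1)] unfolding v_def[symmetric] by simp
    next
      case False
      then show ?thesis using cl_cl[of v u] u vn assms unfolding v_def[symmetric] by auto
    qed
  qed
qed

lemma reach0:
  assumes "u < n" shows "(adj G)\<^sup>*\<^sup>* u 0 \<and> (adj G)\<^sup>*\<^sup>* 0 u"
proof (cases "u < D")
  case True
  then show ?thesis using walk_path[of 0 u] by (auto intro: relpowp_imp_rtranclp)
next
  case False
  then show ?thesis using walk_cl[of 0 u] assms D1 by (auto intro: relpowp_imp_rtranclp)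
qed

lemma fam_wf: "wf_pgraph G"
  unfolding wf_pgraph_def connected_pg_def
proof (intro conjI allI impI)
  show "\<And>u i. u < pg_n G \<Longrightarrow> i < pg_deg G u \<Longrightarrow> pg_nbr G u i < pg_n G" using nbr_ok by simp
  show "\<And>u i. u < pg_n G \<Longrightarrow> i < pg_deg G u \<Longrightarrow> pg_nbr G u i \<noteq> u" using nbr_ok by simp
  show "\<And>u. u < pg_n G \<Longrightarrow> inj_on (pg_nbr G u) {..<pg_deg G u}" using nbr_inj by simp
  show "\<And>u i. u < pg_n G \<Longrightarrow> i < pg_deg G u \<Longrightarrow> \<exists>j<pg_deg G (pg_nbr G u i). pg_nbr G (pg_nbr G u i) j = u"
    using adj_back unfolding adj_def by auto
  show "\<And>u v. u < pg_n G \<Longrightarrow> v < pg_n G \<Longrightarrow> (adj G)\<^sup>*\<^sup>* u v"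
  proof -
    fix u v assume "u < pg_n G" "v < pg_n G"
    then have "(adj G)\<^sup>*\<^sup>* u 0" "(adj G)\<^sup>*\<^sup>* 0 v" using reach0 by auto
    then show "(adj G)\<^sup>*\<^sup>* u v" by (rule rtranclp_trans)
  qed
qed

lemma pot_step:
  assumes "adj G u v" shows "min v D \<le> Suc (min u D)"
proof (cases "u < D - 1")
  case True
  obtain i where i: "i < pg_deg G u" "pg_nbr G u i = v" using assms unfolding adj_def by auto
  then have "v \<le> u + 1" using True by (auto simp: deg_path nbr_path pnbr_def)
  then show ?thesis by simp
next
  case False
  then show ?thesis by simp
qed

lemma pot_walk: "(adj G ^^ j) u v \<Longrightarrow> min v D \<le> j + min u D"
proof (induction j arbitrary: v)
  case 0 then show ?case by simp
next
  case (Suc j)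
  then obtain z where "(adj G ^^ j) u z" "adj G z v" by (auto elim: relpowp_Suc_E)
  then show ?case using Suc.IH pot_step by fastforce
qed

lemma fam_dist_le:
  assumes "u < n" "v < n" shows "dist_pg G u v \<le> D"
proof -
  have "\<exists>d \<le> D. (adj G ^^ d) u v"
  proof (cases "u < D"; cases "v < D")
    assume "u < D" "v < D"
    show ?thesis
    proof (cases "u \<le> v")
      case True
      then show ?thesis using walk_path[of u v] \<open>v < D\<close> by (intro exI[of _ "v - u"]) auto
    next
      case False
      then show ?thesis using walk_path[of v u] \<open>u < D\<close> by (intro exI[of _ "u - v"]) auto
    qed
  next
    assume "u < D" "\<not> v < D"
    then show ?thesis using walk_cl[of u v] assms by (intro exI[of _ "D - u"]) auto
  next
    assume "\<not> u < D" "v < D"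
    then show ?thesis using walk_cl[of v u] assms by (intro exI[of _ "D - v"]) auto
  next
    assume "\<not> u < D" "\<not> v < D"
    show ?thesis
    proof (cases "u = v")
      case True then show ?thesis by (intro exI[of _ 0]) auto
    next
      case False
      then have "adj G u v" using cl_cl \<open>\<not> u < D\<close> \<open>\<not> v < D\<close> assms by simp
      then show ?thesis using D1 by (intro exI[of _ 1]) auto
    qed
  qed
  then show ?thesis using dist_le by (meson le_trans)
qed

lemma fam_diam: "diameter_pg G = D"
proof -
  let ?S = "{dist_pg G u v | u v. u < pg_n G \<and> v < pg_n G}"
  have "?S = (\<lambda>(u,v). dist_pg G u v) ` ({..<pg_n G} \<times> {..<pg_n G})" by auto
  then have fin: "finite ?S" by simp
  have d0: "dist_pg G 0 D = D"
  proof -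
    have "(adj G ^^ dist_pg G 0 D) 0 D" using dist_path[OF fam_wf] Dn by simp
    from pot_walk[OF this] have "D \<le> dist_pg G 0 D" by simp
    then show ?thesis using fam_dist_le[of 0 D] Dn by simp
  qed
  have "D \<in> ?S" unfolding mem_Collect_eq using d0 Dn by (intro exI[of _ 0] exI[of _ D]) simp
  moreover have "\<forall>x \<in> ?S. x \<le> D" using fam_dist_le by auto
  ultimately show ?thesis unfolding diameter_pg_def using fin by (intro Max_eqI) auto
qed

lemma fam_class: "G \<in> graph_class n D"
  unfolding graph_class_def using fam_wf fam_diam by simp

end


lemma fam_same_deg: "x < D \<Longrightarrow> pg_deg (fam n D P1) x = pg_deg (fam n D P2) x"
  by (simp add: fam_def)
lemma fam_same_nbr: "x < D \<Longrightarrow> pg_nbr (fam n D P1) x = pg_nbr (fam n D P2) x"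
  by (simp add: fam_def)

lemma local_run:
  assumes adv: "\<forall>u \<le> T. adv1 u = adv2 u" and TD: "T < D"
  shows "v + t \<le> T \<Longrightarrow> run A (fam n D P1) adv1 t v = run A (fam n D P2) adv2 t v"
proof (induction t arbitrary: v)
  case 0
  then show ?case using adv TD by (simp add: fam_same_deg[of v D n P1 P2])
next
  case (Suc t)
  let ?G1 = "fam n D P1" and ?G2 = "fam n D P2"
  have vD: "v < D - 1" using Suc.prems TD by linarith
  have dg: "pg_deg ?G1 v = pg_deg ?G2 v" using vD by (simp add: fam_same_deg)
  have nb: "pg_nbr ?G1 v = pg_nbr ?G2 v" using vD by (simp add: fam_same_nbr)
  have nbi: "pg_nbr ?G1 v i + t \<le> T \<and> pg_nbr ?G1 v i < D" for i
    using vD Suc.prems TD by (auto simp: fam_def pnbr_def)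
  have rp: "rport ?G1 v i = rport ?G2 v i" for i
  proof -
    have "pg_nbr ?G1 v i < D" using nbi by blast
    then show ?thesis unfolding rport_def nb
      using fam_same_deg[of "pg_nbr ?G2 v i" D n P1 P2] fam_same_nbr[of "pg_nbr ?G2 v i" D n P1 P2] nb
      by simp
  qed
  have rec: "run A ?G1 adv1 t (pg_nbr ?G1 v i) = run A ?G2 adv2 t (pg_nbr ?G2 v i)" for i
    using Suc.IH nbi nb by metis
  have self: "run A ?G1 adv1 t v = run A ?G2 adv2 t v" using Suc.IH Suc.prems by simp
  show ?case using dg rp rec self by simp
qed

lemma fam_inj:
  assumes P1: "P1 \<in> PS n D" and P2: "P2 \<in> PS n D" and D1: "1 \<le> D" and Dn: "D < n"
    and eq: "\<forall>u < n. \<forall>i < pg_deg (fam n D P1) u. pg_nbr (fam n D P1) u i = pg_nbr (fam n D P2) u i"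
  shows "P1 = P2"
proof (rule ext)
  fix u
  show "P1 u = P2 u"
  proof (cases "u \<in> {D..<n}")
    case False
    then show ?thesis using PiE_arb[OF P1[unfolded PS_def]] PiE_arb[OF P2[unfolded PS_def]] by simp
  next
    case True
    then have u: "D \<le> u" "u < n" by auto
    have pp1: "P1 u permutes {1..<n - D}" using P1 u unfolding PS_def by auto
    have pp2: "P2 u permutes {1..<n - D}" using P2 u unfolding PS_def by auto
    show ?thesis
    proof (rule ext)
      fix i
      show "P1 u i = P2 u i"
      proof (cases "i \<in> {1..<n - D}")
        case False
        then show ?thesis using permutes_not_in[OF pp1] permutes_not_in[OF pp2] by simp
      next
        case True
        have "i < pg_deg (fam n D P1) u" using u True by (simp add: fam_def)
        then have "pg_nbr (fam n D P1) u i = pg_nbr (fam n D P2) u i" using eq u by blast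
        then have "base D u (P1 u i) = base D u (P2 u i)"
          using u True by (simp add: fam_def)
        moreover have "P1 u i \<in> {1..<n - D}" "P2 u i \<in> {1..<n - D}"
          using permutes_in_image[OF pp1] permutes_in_image[OF pp2] True by auto
        ultimately show ?thesis using base_inj[of D u "n - D"] unfolding inj_on_def by blast
      qed
    qed
  qed
qed

lemma card_short_lists: "card {xs :: bool list. set xs \<subseteq> UNIV \<and> length xs \<le> s} \<le> 2 ^ (s + 1)"
proof -
  have "card {xs :: bool list. set xs \<subseteq> UNIV \<and> length xs \<le> s} = (\<Sum>i\<le>s. 2 ^ i)"
    by (subst card_lists_length_le) auto
  also have "\<dots> \<le> (2::nat) ^ (s + 1)"
    by (induction s) auto
  finally show ?thesis .
qed

lemma adv_len_le: "u < pg_n GG \<Longrightarrow> advice_size GG adv \<le> s \<Longrightarrow> length (adv u) \<le> s"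
  unfolding advice_size_def by (meson Max_ge finite_imageI finite_lessThan imageI lessThan_iff le_trans)


lemma fam_n'[simp]: "pg_n (fam n D P) = n" by (simp add: fam_def)

lemma count_bound:
  assumes D1: "1 \<le> D" and Dn: "D < n" and TD: "T < D"
    and H: "\<forall>P\<in>PS n D. \<exists>adv. advice_size (fam n D P) adv \<le> s \<and> anon_TR A (fam n D P) adv T"
  shows "card (PS n D) \<le> (2 ^ (s + 1)) ^ (T + 1) * fact n"
proof -
  define advP where "advP P = (SOME adv. advice_size (fam n D P) adv \<le> s \<and> anon_TR A (fam n D P) adv T)" for P
  have advP: "advice_size (fam n D P) (advP P) \<le> s \<and> anon_TR A (fam n D P) (advP P) T" if "P \<in> PS n D" for P
  proof -
    have "\<exists>adv. advice_size (fam n D P) adv \<le> s \<and> anon_TR A (fam n D P) adv T" using H that by blast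
    then show ?thesis unfolding advP_def by (rule someI_ex)
  qed
  define Ou where "Ou P = fst (node_output A (fam n D P) (advP P) T 0)" for P
  define f where "f P = (SOME f. pg_iso (fam n D P) (Ou P) f)" for P
  define g where "g P = (\<lambda>x. if x < n then f P x else x)" for P
  have giso: "pg_iso (fam n D P) (Ou P) (g P) \<and> g P permutes {..<n}" if P: "P \<in> PS n D" for P
  proof -
    have "\<exists>f. pg_iso (fam n D P) (Ou P) f" using advP[OF P] Dn unfolding anon_TR_def Ou_def by (simp add: fam_n')
    then have fi: "pg_iso (fam n D P) (Ou P) (f P)" unfolding f_def by (rule someI_ex)
    have eqon: "\<And>x. x \<in> {..<n} \<Longrightarrow> g P x = f P x" unfolding g_def by simp
    have bf: "bij_betw (f P) {..<n} {..<n}" using fi unfolding pg_iso_def by (metis fam_n')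
    have bg: "bij_betw (g P) {..<n} {..<n}" using bij_betw_cong[of "{..<n}" "g P" "f P" "{..<n}"] eqon bf by simp
    have perm: "g P permutes {..<n}" using bij_imp_permutes[OF bg] unfolding g_def by simp
    have "pg_iso (fam n D P) (Ou P) (g P)"
      using fi bg nbr_ok[OF D1 Dn P] unfolding pg_iso_def g_def by (simp add: fam_n')
    then show ?thesis using perm by blast
  qed
  define Bs where "Bs = {xs :: bool list. set xs \<subseteq> UNIV \<and> length xs \<le> s}"
  define Ls where "Ls = {xs. set xs \<subseteq> Bs \<and> length xs = Suc T}"
  define Ps where "Ps = {p. p permutes {..<n::nat}}"
  define \<Phi> where "\<Phi> P = (map (advP P) [0..<Suc T], g P)" for P
  have finB: "finite Bs" unfolding Bs_def by (rule finite_lists_length_le) simp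
  have maps: "\<Phi> ` PS n D \<subseteq> Ls \<times> Ps"
  proof
    fix y assume "y \<in> \<Phi> ` PS n D"
    then obtain P where P: "P \<in> PS n D" "y = \<Phi> P" by blast
    have "length (advP P u) \<le> s" if "u < Suc T" for u
      using adv_len_le[of u "fam n D P" "advP P" s] advP[OF P(1)] that TD Dn by (simp add: fam_n')
    then have "map (advP P) [0..<Suc T] \<in> Ls" unfolding Ls_def Bs_def by auto
    then show "y \<in> Ls \<times> Ps" using giso[OF P(1)] P(2) unfolding \<Phi>_def Ps_def by simp
  qed
  have inj: "inj_on \<Phi> (PS n D)"
  proof (rule inj_onI)
    fix P1 P2 assume P1: "P1 \<in> PS n D" and P2: "P2 \<in> PS n D" and e: "\<Phi> P1 = \<Phi> P2"
    have me: "map (advP P1) [0..<Suc T] = map (advP P2) [0..<Suc T]" and ge: "g P1 = g P2"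
      using e unfolding \<Phi>_def by auto
    have ae: "\<forall>u \<le> T. advP P1 u = advP P2 u"
    proof (intro allI impI)
      fix u assume "u \<le> T"
      then have "u < length [0..<Suc T]" by simp
      then show "advP P1 u = advP P2 u" using nth_map[of u "[0..<Suc T]"] me
        by (metis \<open>u \<le> T\<close> le_imp_less_Suc minus_nat.diff_0 nth_upt add_0)
    qed
    have Oe: "Ou P1 = Ou P2"
      unfolding Ou_def node_output_def using local_run[OF ae TD, of 0 T A n P1 P2] by simp
    have eq: "\<forall>u < n. \<forall>i < pg_deg (fam n D P1) u. pg_nbr (fam n D P1) u i = pg_nbr (fam n D P2) u i"
    proof (intro allI impI)
      fix u i assume u: "u < n" and i: "i < pg_deg (fam n D P1) u"
      have i1: "pg_deg (Ou P1) (g P1 u) = pg_deg (fam n D P1) u"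
        "pg_nbr (Ou P1) (g P1 u) i = g P1 (pg_nbr (fam n D P1) u i)"
        using giso[OF P1] u i unfolding pg_iso_def by (auto simp: fam_n')
      have i2': "pg_deg (Ou P2) (g P2 u) = pg_deg (fam n D P2) u"
        using giso[OF P2] u unfolding pg_iso_def by (auto simp: fam_n')
      then have i2d: "i < pg_deg (fam n D P2) u" using i i1(1) Oe ge by simp
      have i2: "pg_nbr (Ou P2) (g P2 u) i = g P2 (pg_nbr (fam n D P2) u i)"
        using giso[OF P2] u i2d unfolding pg_iso_def by (auto simp: fam_n')
      have "g P1 (pg_nbr (fam n D P1) u i) = g P1 (pg_nbr (fam n D P2) u i)"
        using i1 i2 Oe ge by simp
      moreover have "inj_on (g P1) {..<n}" using giso[OF P1] permutes_inj by (metis inj_on_subset subset_UNIV)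
      moreover have "pg_nbr (fam n D P1) u i < n" using nbr_ok[OF D1 Dn P1 u] i by simp
      moreover have "pg_nbr (fam n D P2) u i < n" using nbr_ok[OF D1 Dn P2 u] i2d by simp
      ultimately show "pg_nbr (fam n D P1) u i = pg_nbr (fam n D P2) u i"
        unfolding inj_on_def by blast
    qed
    show "P1 = P2" using fam_inj[OF P1 P2 D1 Dn eq] .
  qed
  have "card (PS n D) = card (\<Phi> ` PS n D)" using card_image[OF inj] by simp
  also have "\<dots> \<le> card (Ls \<times> Ps)"
  proof (rule card_mono)
    show "finite (Ls \<times> Ps)" unfolding Ls_def Ps_def
      using finite_lists_length_eq[OF finB] finite_permutations[of "{..<n}"] by simp
  qed (rule maps)
  also have "\<dots> = card Bs ^ Suc T * fact n"
    unfolding Ls_def Ps_def card_cartesian_product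
    by (simp add: card_lists_length_eq[OF finB] card_permutations)
  also have "\<dots> \<le> (2 ^ (s + 1)) ^ (T + 1) * fact n"
    using card_short_lists[of s] unfolding Bs_def[symmetric] Suc_eq_plus1
    by (intro mult_right_mono power_mono) auto
  finally show ?thesis .
qed


lemma fact_ge_pow: "j \<le> K \<Longrightarrow> j ^ (K - j) \<le> fact K"
proof (induction K rule: dec_induct)
  case base then show ?case by simp
next
  case (step K)
  have "j ^ (Suc K - j) = j * j ^ (K - j)" using step.hyps by (simp add: Suc_diff_le)
  also have "\<dots> \<le> Suc K * fact K" using step.IH step.hyps by (intro mult_mono) auto
  also have "\<dots> = fact (Suc K)" by simp
  finally show ?case .
qed

lemma fact_log_lb:
  assumes m: "4 \<le> m"
  shows "real m / 4 * log 2 (real m / 4) \<le> log 2 (fact (m - 1))"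
proof -
  define K where "K = m - 1"
  define j where "j = K div 2"
  have jK: "j \<le> K" unfolding j_def by simp
  have j4: "real m / 4 \<le> real j" unfolding j_def K_def using m by linarith
  have Kj: "real m / 4 \<le> real (K - j)" unfolding j_def K_def using m by linarith
  have j1: "1 \<le> real j" using j4 m by linarith
  have "real (j ^ (K - j)) \<le> real (fact K)" using fact_ge_pow[OF jK] by (simp only: of_nat_le_iff)
  then have "log 2 (real j ^ (K - j)) \<le> log 2 (fact K)" using j1 by (subst log_le_cancel_iff) auto
  then have a: "real (K - j) * log 2 (real j) \<le> log 2 (fact K)" using j1 by (simp add: log_nat_power)
  have l0: "0 \<le> log 2 (real m / 4)" using m by simp
  have "log 2 (real m / 4) \<le> log 2 (real j)" using j4 m by (subst log_le_cancel_iff) auto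
  then have "real m / 4 * log 2 (real m / 4) \<le> real (K - j) * log 2 (real j)"
    using Kj l0 by (intro mult_mono) auto
  then show ?thesis using a unfolding K_def by linarith
qed

lemma lower_arith:
  fixes \<beta> :: real
  assumes b: "0 < \<beta>" "\<beta> \<le> 1" and n: "32 / \<beta>^2 \<le> real n"
    and m: "\<beta> * real n \<le> real m" and T: "T + 1 \<le> n"
    and key: "real m * log 2 (fact (m - 1)) \<le> real ((s + 1) * (T + 1)) + real n * log 2 (real n)"
  shows "\<beta>^2 / 16 * (real n ^ 2 * log 2 (real n) / real (T + 1)) \<le> real s"
proof -
  define L where "L = log 2 (real n)"
  have b2: "0 < \<beta>^2" "\<beta>^2 \<le> 1" using b by (auto simp: power_le_one)
  have n32: "32 \<le> real n"
  proof -
    have "32 \<le> 32 / \<beta>^2" using b2 by (simp add: field_simps)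
    then show ?thesis using n by linarith
  qed
  have npos: "0 < real n" using n32 by simp
  have L1: "1 \<le> L" unfolding L_def using n32 by (simp add: le_log_iff)
  have bn32: "32 \<le> \<beta>^2 * real n" using n b2 by (simp add: field_simps)
  have "\<beta> * 32 \<le> \<beta>^2 * real n" using bn32 b by (smt (verit) mult_left_le_one_le power2_eq_square)
  then have "32 \<le> \<beta> * real n" using b by (simp add: power2_eq_square)
  then have m32: "32 \<le> real m" using m by linarith
  then have m4: "4 \<le> m" by simp
  have "16 / \<beta>^2 \<le> 32 / \<beta>^2" using b2 by (intro divide_right_mono) auto
  then have "16 / \<beta>^2 \<le> real n" using n by linarith
  then have "16 \<le> \<beta>^2 * real n" using b2 by (simp add: field_simps)
  then have "log 2 16 \<le> log 2 (\<beta>^2 * real n)" using b2 by (subst log_le_cancel_iff) auto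
  moreover have "log 2 (16::real) = 4"
  proof -
    show ?thesis using log_pow_cancel[of "2::real" 4] by simp
  qed
  moreover have "log 2 (\<beta>^2 * real n) = 2 * log 2 \<beta> + L"
    unfolding L_def using b npos by (simp add: log_mult log_nat_power)
  ultimately have "4 \<le> 2 * log 2 \<beta> + L" by linarith
  then have hL: "L / 2 \<le> log 2 \<beta> + L - 2" by linarith
  have "log 2 (\<beta> * real n / 4) = log 2 \<beta> + L - 2"
    unfolding L_def using b npos log_pow_cancel[of "2::real" 2] by (simp add: log_mult log_divide)
  moreover have "log 2 (\<beta> * real n / 4) \<le> log 2 (real m / 4)"
    using m b npos m32 by (subst log_le_cancel_iff) auto
  ultimately have lm: "L / 2 \<le> log 2 (real m / 4)" using hL by linarith
  have "real m / 4 * (L / 2) \<le> real m / 4 * log 2 (real m / 4)"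
    using lm m32 by (intro mult_left_mono) auto
  also have "\<dots> \<le> log 2 (fact (m - 1))" using fact_log_lb[OF m4] .
  finally have lf: "real m * L / 8 \<le> log 2 (fact (m - 1))" by simp
  have "real m * (real m * L / 8) \<le> real m * log 2 (fact (m - 1))"
    using lf m32 by (intro mult_left_mono) auto
  moreover have "(\<beta> * real n) * (\<beta> * real n) * L \<le> real m * real m * L"
    using m b npos L1 by (intro mult_right_mono mult_mono) auto
  ultimately have "\<beta>^2 * real n^2 * L / 8 \<le> real ((s + 1) * (T + 1)) + real n * L"
    using key unfolding L_def[symmetric] by (simp add: power2_eq_square algebra_simps)
  then have A: "\<beta>^2 * real n^2 * L / 8 \<le> real s * real (T + 1) + real (T + 1) + real n * L"
    by (simp add: algebra_simps)
  have "0 \<le> real n * (L - 1)" using L1 npos by simp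
  then have nL: "real n \<le> real n * L" by (simp add: algebra_simps)
  have "real (T + 1) \<le> real n" using T by (simp only: of_nat_le_iff)
  then have "real (T + 1) \<le> real n * L" using nL by linarith
  then have B: "\<beta>^2 * real n^2 * L / 8 - 2 * (real n * L) \<le> real s * real (T + 1)" using A by linarith
  have "2 * (real n * L) \<le> \<beta>^2 * real n^2 * L / 16"
  proof -
    have "32 * (real n * L) \<le> (\<beta>^2 * real n) * (real n * L)"
      using bn32 npos L1 by (intro mult_right_mono) auto
    then show ?thesis by (simp add: power2_eq_square algebra_simps)
  qed
  then have "\<beta>^2 * real n^2 * L / 16 \<le> real s * real (T + 1)" using B by linarith
  then show ?thesis unfolding L_def[symmetric] using T
    by (simp add: field_simps)
qed


lemma card_PS: "card (PS n D) = fact (n - D - 1) ^ (n - D)"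
proof -
  have "card (PS n D) = (\<Prod>u\<in>{D..<n}. card {p. p permutes {1..<n - D}})"
    unfolding PS_def by (rule card_PiE) simp
  also have "\<dots> = (\<Prod>u\<in>{D..<n}. fact (n - D - 1))"
    by (intro prod.cong refl card_permutations) auto
  also have "\<dots> = fact (n - D - 1) ^ (n - D)" by simp
  finally show ?thesis .
qed

lemma key_ineq:
  assumes c: "card (PS n D) \<le> (2 ^ (s + 1)) ^ (T + 1) * fact n" and n: "0 < n"
  shows "real (n - D) * log 2 (fact (n - D - 1)) \<le> real ((s + 1) * (T + 1)) + real n * log 2 (real n)"
proof -
  define m where "m = n - D"
  have "fact (m - 1) ^ m \<le> 2 ^ ((s + 1) * (T + 1)) * (fact n :: nat)"
  proof -
    have eq: "((2::nat) ^ (s + 1)) ^ (T + 1) = 2 ^ ((s + 1) * (T + 1))" by (simp only: power_mult)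
    show ?thesis using c unfolding eq card_PS m_def .
  qed
  then have "real (fact (m - 1) ^ m) \<le> real (2 ^ ((s + 1) * (T + 1)) * fact n)"
    by (simp only: of_nat_le_iff)
  then have r: "(fact (m - 1) :: real) ^ m \<le> 2 ^ ((s + 1) * (T + 1)) * fact n" by simp
  have fpos: "0 < (fact (m - 1) :: real)" by simp
  have "log 2 ((fact (m - 1) :: real) ^ m) \<le> log 2 (2 ^ ((s + 1) * (T + 1)) * fact n)"
    using r fpos by (subst log_le_cancel_iff) auto
  then have "real m * log 2 (fact (m - 1)) \<le> real ((s + 1) * (T + 1)) + log 2 (fact n)"
    using fpos by (simp add: log_nat_power log_mult)
  moreover have "log 2 (fact n :: real) \<le> real n * log 2 (real n)"
  proof -
    have "(fact n :: real) \<le> real n ^ n" using fact_le_power[of n] by simp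
    then have "log 2 (fact n :: real) \<le> log 2 (real n ^ n)" by (subst log_le_cancel_iff) (use n in auto)
    then show ?thesis using n by (simp add: log_nat_power)
  qed
  ultimately show ?thesis unfolding m_def by linarith
qed

theorem corollary6p3:
  fixes \<alpha> :: real
  assumes "0 < \<alpha>" and "\<alpha> < 1"
  shows "\<exists>c1 c2 :: real. \<exists>N :: nat. c1 > 0 \<and> c2 > 0 \<and>
    (\<forall>n D k. n \<ge> N \<and> real D \<le> \<alpha> * real n \<and> 0 < k \<and> k \<le> D \<longrightarrow>
       c1 * (real n ^ 2 * log 2 (real n) / real (D - k + 1))
         \<le> real (min_advice anon_TR (graph_class n D) (D - k)) \<and>
       real (min_advice labeled_TR (graph_class n D) (D - k))
         \<le> c2 * (real n ^ 2 * log 2 (real n) / real (D - k + 1)))"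
proof -
  define \<beta> where "\<beta> = 1 - \<alpha>"
  have b: "0 < \<beta>" "\<beta> \<le> 1" unfolding \<beta>_def using assms by auto
  define N where "N = nat \<lceil>32 / \<beta>^2\<rceil> + 2"
  have main: "\<forall>n D k. n \<ge> N \<and> real D \<le> \<alpha> * real n \<and> 0 < k \<and> k \<le> D \<longrightarrow>
       \<beta>^2 / 16 * (real n ^ 2 * log 2 (real n) / real (D - k + 1))
         \<le> real (min_advice anon_TR (graph_class n D) (D - k)) \<and>
       real (min_advice labeled_TR (graph_class n D) (D - k))
         \<le> 16 * (real n ^ 2 * log 2 (real n) / real (D - k + 1))"
  proof (intro allI impI conjI)
    fix n D k assume H: "N \<le> n \<and> real D \<le> \<alpha> * real n \<and> 0 < k \<and> k \<le> D"
    define T where "T = D - k"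
    have TD: "T < D" and D1: "1 \<le> D" and T1: "D - k + 1 = T + 1" using H unfolding T_def by auto
    have n2: "2 \<le> n" using H unfolding N_def by simp
    have nN: "32 / \<beta>^2 \<le> real n"
    proof -
      have "32 / \<beta>^2 \<le> real (nat \<lceil>32 / \<beta>^2\<rceil>)" by linarith
      also have "\<dots> \<le> real n"
      proof -
        have "nat \<lceil>32 / \<beta>^2\<rceil> \<le> n" using H unfolding N_def by linarith
        then show ?thesis by (simp only: of_nat_le_iff)
      qed
      finally show ?thesis .
    qed
    have Dn: "D < n"
    proof -
      have "\<alpha> * real n < real n" using assms n2 by simp
      then show ?thesis using H by linarith
    qed
    show "real (min_advice labeled_TR (graph_class n D) (D - k))
         \<le> 16 * (real n ^ 2 * log 2 (real n) / real (D - k + 1))"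
      using upper_bound(1)[OF n2 TD Dn] unfolding T_def by simp
    obtain s' A' where ex: "\<forall>G \<in> graph_class n D. \<exists>adv. advice_size G adv \<le> s' \<and> anon_TR A' G adv T"
      using upper_bound(2)[OF n2 TD Dn] by blast
    define s0 where "s0 = min_advice anon_TR (graph_class n D) T"
    have "\<exists>A. \<forall>G \<in> graph_class n D. \<exists>adv. advice_size G adv \<le> s0 \<and> anon_TR A G adv T"
      unfolding s0_def min_advice_def by (rule LeastI_ex) (use ex in blast)
    then obtain A where A: "\<forall>G \<in> graph_class n D. \<exists>adv. advice_size G adv \<le> s0 \<and> anon_TR A G adv T"
      by blast
    have HP: "\<forall>P\<in>PS n D. \<exists>adv. advice_size (fam n D P) adv \<le> s0 \<and> anon_TR A (fam n D P) adv T"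
      using A fam_class[OF D1 Dn] by blast
    have c: "card (PS n D) \<le> (2 ^ (s0 + 1)) ^ (T + 1) * fact n" using count_bound[OF D1 Dn TD HP] .
    have key: "real (n - D) * log 2 (fact (n - D - 1)) \<le> real ((s0 + 1) * (T + 1)) + real n * log 2 (real n)"
      using key_ineq[OF c] n2 by simp
    have m: "\<beta> * real n \<le> real (n - D)" using H Dn unfolding \<beta>_def by (simp add: of_nat_diff algebra_simps)
    have T': "T + 1 \<le> n" using TD Dn by simp
    have "\<beta>^2 / 16 * (real n ^ 2 * log 2 (real n) / real (T + 1)) \<le> real s0"
      using lower_arith[OF b nN m T' key] by simp
    then show "\<beta>^2 / 16 * (real n ^ 2 * log 2 (real n) / real (D - k + 1))
         \<le> real (min_advice anon_TR (graph_class n D) (D - k))"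
      unfolding s0_def T_def by simp
  qed
  have "0 < \<beta>^2 / 16" using b by simp
  then show ?thesis using main by (intro exI[of _ "\<beta>^2 / 16"] exI[of _ "16"] exI[of _ N]) simp
qed


end
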